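(* Let $T\subseteq P_{2n}$ be transitive and closed under reversal. Then: 1. $(i,j)\in T$ implies $S_{2n,i,j}\in B_{2n}(T)$. 2. If $i\in[2n]$ and $v\in\mathbb{F}^{2n}$ is supported on $\{j:(j,i)\in T\}$, then $S_{2n,v,i}\in B_{2n}(T)$. 3. The set $\{S_{2n,i,j}: j\in[n],\ j+1\le i\le 2n+1-j,\ (i,j)\in T\}$ generates $B_{2n}(T)$. 4. Every $B\in B_{2n}(T)$ satisfies $B=S_{2n,V_n(B)e_{n,1},1}\cdots S_{2n,V_n(B)e_{n,n},n}$, and each factor $S_{2n,V_n(B)e_{n,j},j}$ lies in $B_{2n}(T)$ and is a product of generators from part 3; this gives a canonical expression of each element of $B_{2n}(T)$ in terms of these generators.
   Context: $\mathbb{F}$ is the field with two elements, $e_{N,i}$ standard basis column vectors, $I_N$ the identity, $[N]=\{1,\dots,N\}$. $R_{2n}=\sum_{i=1}^{2n}e_{2n,i}e_{2n,2n+1-i}^{\top}$; $\mathrm{Sp}_{2n}=\{C:C^{\top}R_{2n}C=R_{2n}\}$. $P_{2n}=\{(i,j):i,j\in[2n],i>j\}$. $T\subseteq P_{2n}$ is transitive if $(i,j),(j,k)\in T\Rightarrow(i,k)\in T$, and closed under reversal if $(i,j)\in T\iff(2n+1-j,2n+1-i)\in T$. $B_{2n}(T)=\big(I_{2n}+\mathrm{span}_{\mathbb{F}}\{e_{2n,i}e_{2n,j}^{\top}:(i,j)\in T\}\big)\cap\mathrm{Sp}_{2n}$. For $i\ne j\in[2n]$: $S_{2n,i,j}=I_{2n}+e_{2n,i}e_{2n,j}^{\top}$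 if $i+j=2n+1$, else $S_{2n,i,j}=I_{2n}+e_{2n,i}e_{2n,j}^{\top}+e_{2n,2n+1-j}e_{2n,2n+1-i}^{\top}$. For $v\in\mathbb{F}^{2n}$ with $v_i=0$: $S_{2n,v,i}=I_{2n}+ve_{2n,i}^{\top}+R_{2n}e_{2n,i}v^{\top}R_{2n}+v_{2n+1-i}e_{2n,2n+1-i}e_{2n,i}^{\top}$. $V_n(B)=\sum_{j=1}^n\sum_{i=j+1}^{2n+1-j}e_{2n,i}e_{2n,i}^{\top}Be_{2n,j}e_{n,j}^{\top}$. *)

theory Defs
  imports "HOL-Library.Z2" "Jordan_Normal_Form.Matrix"
begin

text \<open>The field F with two elements is the type bit (HOL-Library.Z2).
  Matrices are Jordan_Normal_Form matrices (0-based internally); all definitions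
  below take 1-based paper indices and translate them.\<close>

definition ev :: "nat \<Rightarrow> nat \<Rightarrow> bit vec" where
  "ev N i = unit_vec N (i - 1)"

definition outer :: "bit vec \<Rightarrow> bit vec \<Rightarrow> bit mat" where
  "outer u w = mat (dim_vec u) (dim_vec w) (\<lambda>(a, b). u $ a * w $ b)"

definition E :: "nat \<Rightarrow> nat \<Rightarrow> nat \<Rightarrow> bit mat" where
  "E N i j = outer (ev N i) (ev N j)"

definition R :: "nat \<Rightarrow> bit mat" where
  "R n = mat (2*n) (2*n) (\<lambda>(a, b). if (a + 1) + (b + 1) = 2*n + 1 then 1 else 0)"

definition Sp :: "nat \<Rightarrow> bit mat set" where
  "Sp n = {C \<in> carrier_mat (2*n) (2*n). transpose_mat C * R n * C = R n}"

definition P :: "nat \<Rightarrow> (nat \<times> nat) set" where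
  "P n = {(i, j). i \<in> {1..2*n} \<and> j \<in> {1..2*n} \<and> i > j}"

definition transitive_rel :: "(nat \<times> nat) set \<Rightarrow> bool" where
  "transitive_rel T \<longleftrightarrow> (\<forall>i j k. (i, j) \<in> T \<longrightarrow> (j, k) \<in> T \<longrightarrow> (i, k) \<in> T)"

definition reversal_closed :: "nat \<Rightarrow> (nat \<times> nat) set \<Rightarrow> bool" where
  "reversal_closed n T \<longleftrightarrow> (\<forall>i j. (i, j) \<in> T \<longleftrightarrow> (2*n + 1 - j, 2*n + 1 - i) \<in> T)"

text \<open>B_{2n}(T) = (I + span{E_{ij} : (i,j) in T}) \<inter> Sp_{2n}.  Over F the span
  consists of the sums of subsets of the matrix units.\<close>
definition Bgrp :: "nat \<Rightarrow> (nat \<times> nat) set \<Rightarrow> bit mat set" where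
  "Bgrp n T = {C \<in> Sp n. \<exists>c :: nat \<times> nat \<Rightarrow> bit.
      C = mat (2*n) (2*n) (\<lambda>(a, b). (if a = b then 1 else 0) +
            (if (a + 1, b + 1) \<in> T then c (a + 1, b + 1) else 0))}"

definition S :: "nat \<Rightarrow> nat \<Rightarrow> nat \<Rightarrow> bit mat" where
  "S n i j = (if i + j = 2*n + 1 then 1\<^sub>m (2*n) + E (2*n) i j
              else 1\<^sub>m (2*n) + E (2*n) i j + E (2*n) (2*n + 1 - j) (2*n + 1 - i))"

text \<open>S_{2n,v,i} (v given as a vector of dimension 2n; v_k is v $ (k-1)).\<close>
definition Sv :: "nat \<Rightarrow> bit vec \<Rightarrow> nat \<Rightarrow> bit mat" where
  "Sv n v i = 1\<^sub>m (2*n) + outer v (ev (2*n) i)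
      + R n * outer (ev (2*n) i) v * R n
      + (v $ (2*n + 1 - i - 1)) \<cdot>\<^sub>m E (2*n) (2*n + 1 - i) i"

definition V :: "nat \<Rightarrow> bit mat \<Rightarrow> bit mat" where
  "V n B = mat (2*n) n (\<lambda>(a, b). if b + 1 + 1 \<le> a + 1 \<and> a + 1 \<le> 2*n + 1 - (b + 1)
                                  then B $$ (a, b) else 0)"

definition prodm :: "nat \<Rightarrow> bit mat list \<Rightarrow> bit mat" where
  "prodm N As = foldr (\<lambda>A C. A * C) As (1\<^sub>m N)"

definition Gens :: "nat \<Rightarrow> (nat \<times> nat) set \<Rightarrow> bit mat set" where
  "Gens n T = {S n i j | i j. j \<in> {1..n} \<and> j + 1 \<le> i \<and> i \<le> 2*n + 1 - j \<and> (i, j) \<in> T}"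

inductive_set gen_group :: "nat \<Rightarrow> bit mat set \<Rightarrow> bit mat set" for N G where
  one: "1\<^sub>m N \<in> gen_group N G"
| gen: "g \<in> G \<Longrightarrow> g \<in> gen_group N G"
| mult: "A \<in> gen_group N G \<Longrightarrow> C \<in> gen_group N G \<Longrightarrow> A * C \<in> gen_group N G"
| inv: "A \<in> gen_group N G \<Longrightarrow> A' \<in> carrier_mat N N \<Longrightarrow> A * A' = 1\<^sub>m N
        \<Longrightarrow> A' \<in> gen_group N G"

end

theory Submission
  imports Defs
begin

declare add_bit_eq_xor[simp del] mult_bit_eq_and[simp del]
lemma bit_add_self[simp]: "(x::bit) + x = 0"
  by (cases x) simp_all
lemma bit_add_self2[simp]: "(x::bit) + (x + y) = y"
  by (cases x; cases y) simp_all

lemma ev_dim[simp]: "dim_vec (ev N i) = N"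
  by (simp add: ev_def)
lemma ev_idx: "x < N \<Longrightarrow> ev N i $ x = (if x = i - 1 then 1 else 0)"
  by (simp add: ev_def unit_vec_def)
lemma outer_carrier[simp]: "outer u w \<in> carrier_mat (dim_vec u) (dim_vec w)"
  by (simp add: outer_def)
lemma outer_dims[simp]: "dim_row (outer u w) = dim_vec u" "dim_col (outer u w) = dim_vec w"
  by (simp_all add: outer_def)
lemma outer_idx: "a < dim_vec u \<Longrightarrow> b < dim_vec w \<Longrightarrow> outer u w $$ (a,b) = u$a * w$b"
  by (simp add: outer_def)
lemma E_carrier[simp]: "E N i j \<in> carrier_mat N N"
  by (metis E_def ev_dim outer_carrier)
lemma E_dims[simp]: "dim_row (E N i j) = N" "dim_col (E N i j) = N"
  by (simp_all add: E_def)
lemma E_idx: "a < N \<Longrightarrow> b < N \<Longrightarrow> E N i j $$ (a,b) = (if a = i - 1 \<and> b = j - 1 then 1 else 0)"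
  by (simp add: E_def outer_idx ev_idx)
lemma R_carrier[simp]: "R n \<in> carrier_mat (2*n) (2*n)"
  by (simp add: R_def)
lemma R_dims[simp]: "dim_row (R n) = 2*n" "dim_col (R n) = 2*n"
  by (simp_all add: R_def)
lemma R_idx: "a < 2*n \<Longrightarrow> b < 2*n \<Longrightarrow> R n $$ (a,b) = (if a + b = 2*n - 1 then 1 else 0)"
  by (auto simp add: R_def)

lemma R_mult: assumes "A \<in> carrier_mat (2*n) m" "a < 2*n" "c < m"
  shows "(R n * A) $$ (a,c) = A $$ (2*n-1-a, c)"
proof -
  have "(R n * A) $$ (a,c) = (\<Sum>i\<in>{0..<2*n}. R n $$ (a,i) * A $$ (i,c))"
    using assms by (simp add: scalar_prod_def)
  also have "\<dots> = (\<Sum>i\<in>{0..<2*n}. (if 2*n-1-a = i then A$$(i,c) else 0))"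
    using assms by (intro sum.cong) (auto simp: R_idx)
  also have "\<dots> = A $$ (2*n-1-a, c)" using assms by simp
  finally show ?thesis .
qed

lemma mult_R: assumes "A \<in> carrier_mat m (2*n)" "a < m" "c < 2*n"
  shows "(A * R n) $$ (a,c) = A $$ (a, 2*n-1-c)"
proof -
  have "(A * R n) $$ (a,c) = (\<Sum>i\<in>{0..<2*n}. A $$ (a,i) * R n $$ (i,c))"
    using assms by (simp add: scalar_prod_def)
  also have "\<dots> = (\<Sum>i\<in>{0..<2*n}. (if 2*n-1-c = i then A$$(a,i) else 0))"
    using assms by (intro sum.cong) (auto simp: R_idx)
  also have "\<dots> = A $$ (a, 2*n-1-c)" using assms by simp
  finally show ?thesis .
qed

lemma Sv_carrier[simp]: assumes "v \<in> carrier_vec (2*n)" shows "Sv n v i \<in> carrier_mat (2*n) (2*n)"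
  using assms unfolding Sv_def by auto

lemma Sv_dims[simp]: "dim_row (Sv n v i) = 2*n" "dim_col (Sv n v i) = 2*n"
  by (simp_all add: Sv_def)

lemma Sv_idx: assumes "v \<in> carrier_vec (2*n)" "a < 2*n" "b < 2*n" "i \<in> {1..2*n}"
  shows "Sv n v i $$ (a,b) = (if a = b then 1 else 0) + (if b = i - 1 then v$a else 0)
     + (if a = 2*n - i then v$(2*n-1-b) else 0) + (if a = 2*n - i \<and> b = i - 1 then v$(2*n-i) else 0)"
proof -
  have o1: "outer (ev (2*n) i) v \<in> carrier_mat (2*n) (2*n)" using assms by (metis ev_dim carrier_vecD outer_carrier)
  have "(R n * outer (ev (2*n) i) v * R n) $$ (a,b) = (R n * outer (ev (2*n) i) v) $$ (a, 2*n-1-b)"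
    using assms o1 by (intro mult_R) auto
  also have "\<dots> = outer (ev (2*n) i) v $$ (2*n-1-a, 2*n-1-b)"
    using assms o1 by (intro R_mult) auto
  also have "\<dots> = (if a = 2*n - i then v$(2*n-1-b) else 0)"
    using assms by (auto simp: outer_idx ev_idx)
  finally have rr: "(R n * outer (ev (2*n) i) v * R n) $$ (a,b) = (if a = 2*n - i then v$(2*n-1-b) else 0)" .
  show ?thesis using assms o1 unfolding Sv_def
    by (simp add: rr outer_idx ev_idx E_idx)
qed

lemma Sv_mult: assumes v: "v \<in> carrier_vec (2*n)" and X: "X \<in> carrier_mat (2*n) m"
  and a: "a < 2*n" and c: "c < m" and i: "i \<in> {1..2*n}"
  shows "(Sv n v i * X) $$ (a,c) = X $$ (a,c) + v$a * X $$ (i-1,c)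
    + (if a = 2*n - i then (\<Sum>b\<in>{0..<2*n}. v$(2*n-1-b) * X$$(b,c)) + v$(2*n-i) * X$$(i-1,c) else 0)"
proof -
  have i1: "i - 1 < 2*n" using i by auto
  have C: "dim_row (Sv n v i) = 2*n" "dim_col (Sv n v i) = 2*n" using Sv_carrier[OF v] by auto
  have "(Sv n v i * X) $$ (a,c) = (\<Sum>b\<in>{0..<2*n}. Sv n v i $$ (a,b) * X $$ (b,c))"
    using X a c C by (simp add: scalar_prod_def)
  also have "\<dots> = (\<Sum>b\<in>{0..<2*n}. (if a = b then X$$(b,c) else 0) + (if b = i - 1 then v$a * X$$(b,c) else 0)
     + (if a = 2*n - i then v$(2*n-1-b) * X$$(b,c) else 0) + (if a = 2*n - i \<and> b = i - 1 then v$(2*n-i) * X$$(b,c) else 0))"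
    using assms by (intro sum.cong) (auto simp: Sv_idx distrib_right)
  also have "\<dots> = X $$ (a,c) + v$a * X $$ (i-1,c)
    + (if a = 2*n - i then (\<Sum>b\<in>{0..<2*n}. v$(2*n-1-b) * X$$(b,c)) + v$(2*n-i) * X$$(i-1,c) else 0)"
    using a i1 by (cases "a = 2*n-i") (simp_all add: sum.distrib)
  finally show ?thesis .
qed

lemma om_self: fixes n :: nat and f :: "nat \<Rightarrow> bit" shows "(\<Sum>x\<in>{0..<2*n}. f (2*n-1-x) * f x) = (0::bit)"
proof -
  let ?g = "\<lambda>x. f (2*n-1-x) * f x"
  have s: "{0..<2*n} = {0..<n} \<union> {n..<2*n}" by auto
  have "(\<Sum>x\<in>{n..<2*n}. ?g x) = (\<Sum>x\<in>{0..<n}. ?g (2*n-1-x))"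
    by (rule sum.reindex_bij_witness[of _ "\<lambda>x. 2*n-1-x" "\<lambda>x. 2*n-1-x"]) auto
  also have "\<dots> = (\<Sum>x\<in>{0..<n}. ?g x)"
    by (intro sum.cong) (auto simp: mult.commute)
  finally have e: "(\<Sum>x\<in>{n..<2*n}. ?g x) = (\<Sum>x\<in>{0..<n}. ?g x)" .
  have "(\<Sum>x\<in>{0..<2*n}. ?g x) = (\<Sum>x\<in>{0..<n}. ?g x) + (\<Sum>x\<in>{n..<2*n}. ?g x)"
    unfolding s by (rule sum.union_disjoint) auto
  then show ?thesis using e by simp
qed

lemma Sv_invol: assumes v: "v \<in> carrier_vec (2*n)" and i: "i \<in> {1..2*n}" and vi: "v$(i-1) = 0"
  shows "Sv n v i * Sv n v i = 1\<^sub>m (2*n)"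
proof (rule eq_matI)
  fix a c assume a: "a < dim_row (1\<^sub>m (2*n))" and c: "c < dim_col (1\<^sub>m (2*n))"
  then have a: "a < 2*n" and c: "c < 2*n" by auto
  have i1: "i - 1 < 2*n" using i by auto
  have ne: "i - 1 \<noteq> 2*n - i" using i by auto presburger
  have r: "Sv n v i $$ (i-1, c) = (if i - 1 = c then 1 else 0)"
    using v i c i1 ne vi by (simp add: Sv_idx)
  have "(\<Sum>b\<in>{0..<2*n}. v$(2*n-1-b) * Sv n v i $$ (b,c))
     = (\<Sum>b\<in>{0..<2*n}. (if b = c then v$(2*n-1-b) else 0) + (if c = i - 1 then v$(2*n-1-b) * v$b else 0)
     + (if b = 2*n - i then v$(2*n-1-b) * v$(2*n-1-c) else 0) + (if b = 2*n - i \<and> c = i - 1 then v$(2*n-1-b) * v$(2*n-i) else 0))"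
    using v i c by (intro sum.cong) (auto simp: Sv_idx distrib_left)
  also have "\<dots> = v$(2*n-1-c)"
  proof -
    have "2*n - 1 - (2*n - i) = i - 1" using i by auto
    then show ?thesis using c i1 vi i om_self[where f="\<lambda>x. v$x"] by (cases "c = i - 1") (simp_all add: sum.distrib)
  qed
  finally have s: "(\<Sum>b\<in>{0..<2*n}. v$(2*n-1-b) * Sv n v i $$ (b,c)) = v$(2*n-1-c)" .
  have "(Sv n v i * Sv n v i) $$ (a, c) = Sv n v i $$ (a,c) + v$a * Sv n v i $$ (i-1,c)
    + (if a = 2*n - i then (\<Sum>b\<in>{0..<2*n}. v$(2*n-1-b) * Sv n v i $$ (b,c)) + v$(2*n-i) * Sv n v i $$ (i-1,c) else 0)"
    by (rule Sv_mult[OF v Sv_carrier[OF v] a c i])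
  also have "\<dots> = Sv n v i $$ (a,c) + v$a * (if i - 1 = c then 1 else 0)
    + (if a = 2*n - i then v$(2*n-1-c) + v$(2*n-i) * (if i - 1 = c then 1 else 0) else 0)"
    by (simp only: r s)
  also have "\<dots> = 1\<^sub>m (2*n) $$ (a, c)"
    using a c v i by (cases "c = i - 1"; cases "a = 2*n-i"; simp add: Sv_idx add_ac)
  finally show "(Sv n v i * Sv n v i) $$ (a, c) = 1\<^sub>m (2*n) $$ (a, c)" .
qed (use v in auto)

lemma R_R: "R n * R n = 1\<^sub>m (2*n)"
proof (rule eq_matI)
  fix a c assume "a < dim_row (1\<^sub>m (2*n))" "c < dim_col (1\<^sub>m (2*n))"
  then have a: "a < 2*n" and c: "c < 2*n" by auto
  show "(R n * R n) $$ (a,c) = 1\<^sub>m (2*n) $$ (a,c)"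
    using a c by (auto simp: R_mult[OF R_carrier] R_idx simp del: index_mult_mat)
qed auto

lemma Sv_transpose: assumes v: "v \<in> carrier_vec (2*n)" and i: "i \<in> {1..2*n}"
  shows "transpose_mat (Sv n v i) = R n * Sv n v i * R n"
proof (rule eq_matI)
  fix a b assume "a < dim_row (R n * Sv n v i * R n)" "b < dim_col (R n * Sv n v i * R n)"
  then have a: "a < 2*n" and b: "b < 2*n" by auto
  have "(R n * Sv n v i * R n) $$ (a,b) = Sv n v i $$ (2*n-1-a, 2*n-1-b)"
  proof -
    have C: "Sv n v i \<in> carrier_mat (2*n) (2*n)" using v by simp
    have C2: "R n * Sv n v i \<in> carrier_mat (2*n) (2*n)" using C by (metis R_carrier mult_carrier_mat)
    show ?thesis using a b by (simp add: mult_R[OF C2] R_mult[OF C] del: index_mult_mat)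
  qed
  also have "\<dots> = (if 2*n-1-a = 2*n-1-b then 1 else 0) + (if 2*n-1-b = i - 1 then v$(2*n-1-a) else 0)
     + (if 2*n-1-a = 2*n - i then v$(2*n-1-(2*n-1-b)) else 0) + (if 2*n-1-a = 2*n - i \<and> 2*n-1-b = i - 1 then v$(2*n-i) else 0)"
    using a b v i by (intro Sv_idx) auto
  also have "\<dots> = (if b = a then 1 else 0) + (if b = 2*n-i then v$(2*n-1-a) else 0)
     + (if a = i - 1 then v$b else 0) + (if a = i - 1 \<and> b = 2*n-i then v$(2*n-i) else 0)"
  proof -
    have e1: "(2*n-1-a = 2*n-1-b) = (b = a)" using a b by auto
    have e2: "(2*n-1-b = i - 1) = (b = 2*n-i)" using b i by auto
    have e3: "(2*n-1-a = 2*n-i) = (a = i - 1)" using a i by auto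
    have e4: "2*n-1-(2*n-1-b) = b" using b by auto
    show ?thesis by (simp only: e1 e2 e3 e4 conj_commute)
  qed
  also have "\<dots> = Sv n v i $$ (b, a)"
    using a b v i by (simp add: Sv_idx add_ac)
  finally show "transpose_mat (Sv n v i) $$ (a, b) = (R n * Sv n v i * R n) $$ (a, b)"
    using a b v by simp
qed (use v in auto)

lemma sq_mult_carrier[simp]: "X \<in> carrier_mat N N \<Longrightarrow> Y \<in> carrier_mat N N \<Longrightarrow> X * Y \<in> carrier_mat N N"
  by (rule mult_carrier_mat)
lemma sq_transpose_carrier[simp]: "X \<in> carrier_mat N N \<Longrightarrow> transpose_mat X \<in> carrier_mat N N"
  by auto
lemma sq_assoc: "X \<in> carrier_mat N N \<Longrightarrow> Y \<in> carrier_mat N N \<Longrightarrow> Z \<in> carrier_mat N N \<Longrightarrow> X * Y * Z = X * (Y * Z)"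
  by (rule assoc_mult_mat)
lemma mult_entry: "A \<in> carrier_mat N N \<Longrightarrow> B \<in> carrier_mat N N \<Longrightarrow> a < N \<Longrightarrow> c < N \<Longrightarrow>
   (A*B)$$(a,c) = (\<Sum>b\<in>{0..<N}. A$$(a,b) * B$$(b,c))"
  by (simp add: scalar_prod_def)

lemma one_Sp: "1\<^sub>m (2*n) \<in> Sp n"
  unfolding Sp_def by simp

lemma Sp_mult: assumes A: "A \<in> Sp n" and B: "B \<in> Sp n" shows "A * B \<in> Sp n"
proof -
  have Ac: "A \<in> carrier_mat (2*n) (2*n)" and Ae: "transpose_mat A * R n * A = R n"
    using A by (auto simp: Sp_def)
  have Bc: "B \<in> carrier_mat (2*n) (2*n)" and Be: "transpose_mat B * R n * B = R n"
    using B by (auto simp: Sp_def)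
  have tA: "transpose_mat A \<in> carrier_mat (2*n) (2*n)" and tB: "transpose_mat B \<in> carrier_mat (2*n) (2*n)"
    using Ac Bc by auto
  have "transpose_mat (A * B) * R n * (A * B) = transpose_mat B * transpose_mat A * R n * (A * B)"
    using Ac Bc by (simp add: transpose_mult)
  also have "\<dots> = transpose_mat B * (transpose_mat A * R n * A) * B"
    using Ac Bc tA tB by (simp add: sq_assoc[of _ "2*n"])
  also have "\<dots> = R n" using Ae Be by simp
  finally show ?thesis using Ac Bc by (simp add: Sp_def)
qed

lemma Sv_Sp: assumes v: "v \<in> carrier_vec (2*n)" and i: "i \<in> {1..2*n}" and vi: "v$(i-1) = 0"
  shows "Sv n v i \<in> Sp n"
proof -
  let ?S = "Sv n v i"
  have C: "?S \<in> carrier_mat (2*n) (2*n)" using v by simp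
  have "transpose_mat ?S * R n * ?S = R n * ?S * R n * R n * ?S"
    using Sv_transpose[OF v i] by simp
  also have "\<dots> = R n * (?S * ?S)"
    using C by (simp add: sq_assoc[of _ "2*n"] R_R)
  also have "\<dots> = R n" using Sv_invol[OF v i vi] by simp
  finally show ?thesis using C by (simp add: Sp_def)
qed

lemma sp_cols: assumes C: "C \<in> Sp n" and a: "a < 2*n" and b: "b < 2*n"
  shows "(\<Sum>y\<in>{0..<2*n}. C$$(2*n-1-y, a) * C$$(y,b)) = (if a + b = 2*n - 1 then 1 else 0)"
proof -
  have Cc: "C \<in> carrier_mat (2*n) (2*n)" and Ce: "transpose_mat C * R n * C = R n"
    using C by (auto simp: Sp_def)
  have tC: "transpose_mat C * R n \<in> carrier_mat (2*n) (2*n)" using Cc by auto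
  have "R n $$ (a,b) = (transpose_mat C * R n * C) $$ (a,b)" using Ce by simp
  also have "\<dots> = (\<Sum>y\<in>{0..<2*n}. (transpose_mat C * R n) $$ (a,y) * C $$ (y,b))"
    using mult_entry[OF tC Cc a b] .
  also have "\<dots> = (\<Sum>y\<in>{0..<2*n}. C$$(2*n-1-y, a) * C$$(y,b))"
    using Cc a by (intro sum.cong) (auto simp: mult_R simp del: index_mult_mat)
  finally show ?thesis using a b by (simp add: R_idx)
qed

definition supp_ok :: "nat \<Rightarrow> (nat \<times> nat) set \<Rightarrow> bit mat \<Rightarrow> bool" where
  "supp_ok n T C \<longleftrightarrow> C \<in> carrier_mat (2*n) (2*n) \<and>
     (\<forall>a<2*n. \<forall>b<2*n. C$$(a,b) \<noteq> (if a = b then 1 else 0) \<longrightarrow> (a+1,b+1) \<in> T)"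

lemma diag_notin: "T \<subseteq> P n \<Longrightarrow> (k,k) \<notin> T"
  unfolding P_def by auto

lemma Bgrp_iff: assumes TP: "T \<subseteq> P n"
  shows "C \<in> Bgrp n T \<longleftrightarrow> C \<in> Sp n \<and> supp_ok n T C"
proof
  assume "C \<in> Bgrp n T"
  then obtain c where Sp: "C \<in> Sp n" and Ce: "C = mat (2*n) (2*n) (\<lambda>(a, b). (if a = b then 1 else 0) +
            (if (a + 1, b + 1) \<in> T then c (a + 1, b + 1) else 0))"
    unfolding Bgrp_def by auto
  show "C \<in> Sp n \<and> supp_ok n T C"
    using Sp unfolding supp_ok_def Ce using diag_notin[OF TP] by auto
next
  assume h: "C \<in> Sp n \<and> supp_ok n T C"
  then have Cc: "C \<in> carrier_mat (2*n) (2*n)" by (auto simp: Sp_def)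
  have "C = mat (2*n) (2*n) (\<lambda>(a, b). (if a = b then 1 else 0) +
            (if (a + 1, b + 1) \<in> T then (\<lambda>(i,j). C$$(i-1,j-1)) (a + 1, b + 1) else 0))"
  proof (rule eq_matI)
    fix a b assume "a < dim_row (mat (2*n) (2*n) (\<lambda>(a, b). (if a = b then 1 else 0) +
            (if (a + 1, b + 1) \<in> T then (\<lambda>(i,j). C$$(i-1,j-1)) (a + 1, b + 1) else 0)))"
      "b < dim_col (mat (2*n) (2*n) (\<lambda>(a, b). (if a = b then 1 else 0) +
            (if (a + 1, b + 1) \<in> T then (\<lambda>(i,j). C$$(i-1,j-1)) (a + 1, b + 1) else 0)))"
    then have a: "a < 2*n" and b: "b < 2*n" by auto
    show "C $$ (a,b) = mat (2*n) (2*n) (\<lambda>(a, b). (if a = b then 1 else 0) +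
            (if (a + 1, b + 1) \<in> T then (\<lambda>(i,j). C$$(i-1,j-1)) (a + 1, b + 1) else 0)) $$ (a,b)"
      using h a b diag_notin[OF TP, of "b+1"] unfolding supp_ok_def
      by (cases "a = b") (auto split: if_splits)
  qed (use Cc in auto)
  then show "C \<in> Bgrp n T" unfolding Bgrp_def using h by blast
qed

lemma supp_mult: assumes TP: "T \<subseteq> P n" and tr: "transitive_rel T"
  and A: "supp_ok n T A" and B: "supp_ok n T B"
  shows "supp_ok n T (A * B)"
proof -
  have Ac: "A \<in> carrier_mat (2*n) (2*n)" and Bc: "B \<in> carrier_mat (2*n) (2*n)"
    using A B by (auto simp: supp_ok_def)
  have As: "\<And>a b. a < 2*n \<Longrightarrow> b < 2*n \<Longrightarrow> (a+1,b+1) \<notin> T \<Longrightarrow> A$$(a,b) = (if a = b then 1 else 0)"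
    using A unfolding supp_ok_def by blast
  have Bs: "\<And>a b. a < 2*n \<Longrightarrow> b < 2*n \<Longrightarrow> (a+1,b+1) \<notin> T \<Longrightarrow> B$$(a,b) = (if a = b then 1 else 0)"
    using B unfolding supp_ok_def by blast
  have main: "(A*B)$$(a,c) = (if a = c then 1 else 0)"
    if a: "a < 2*n" and c: "c < 2*n" and nT: "(a+1,c+1) \<notin> T" for a c
  proof -
    have "(A*B)$$(a,c) = (\<Sum>b\<in>{0..<2*n}. A$$(a,b) * B$$(b,c))"
      using Ac Bc a c by (simp add: scalar_prod_def)
    also have "\<dots> = (\<Sum>b\<in>{0..<2*n}. if a = b then (if a = c then 1 else 0) else 0)"
    proof (intro sum.cong refl)
      fix b assume b: "b \<in> {0..<2*n}"
      show "A$$(a,b) * B$$(b,c) = (if a = b then (if a = c then 1 else 0) else 0)"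
      proof (cases "a = b")
        case True
        then show ?thesis using As[OF a a diag_notin[OF TP]] Bs[OF _ c nT] a by simp
      next
        case False
        show ?thesis
        proof (cases "(a+1,b+1) \<in> T")
          case True
          then have "(b+1,c+1) \<notin> T" using nT tr unfolding transitive_rel_def by blast
          then have "B$$(b,c) = (if b = c then 1 else 0)" using Bs b c by auto
          moreover have "b \<noteq> c" using True nT by auto
          ultimately show ?thesis using False by simp
        next
          case F2: False
          then show ?thesis using As[OF a _ F2] b False by simp
        qed
      qed
    qed
    also have "\<dots> = (if a = c then 1 else 0)" using a by simp
    finally show ?thesis .
  qed
  show ?thesis unfolding supp_ok_def
  proof (intro conjI allI impI)
    show "A * B \<in> carrier_mat (2*n) (2*n)" using Ac Bc by simp
    fix a b assume "a < 2*n" "b < 2*n" "(A*B)$$(a,b) \<noteq> (if a = b then 1 else 0)"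
    then show "(a+1,b+1) \<in> T" using main by blast
  qed
qed

lemma Bgrp_mult: assumes TP: "T \<subseteq> P n" and tr: "transitive_rel T"
  and A: "A \<in> Bgrp n T" and B: "B \<in> Bgrp n T" shows "A * B \<in> Bgrp n T"
  using A B Sp_mult supp_mult[OF TP tr] Bgrp_iff[OF TP] by blast

lemma one_Bgrp: "T \<subseteq> P n \<Longrightarrow> 1\<^sub>m (2*n) \<in> Bgrp n T"
  by (simp add: Bgrp_iff one_Sp supp_ok_def)

lemma ev_carrier[simp]: "ev N i \<in> carrier_vec N"
  by (simp add: ev_def)


lemma bit_sum3_nz: "(x::bit) + y + z \<noteq> 0 \<Longrightarrow> x \<noteq> 0 \<or> y \<noteq> 0 \<or> z \<noteq> 0"
  by auto

lemma Sv_supp: assumes TP: "T \<subseteq> P n" and rc: "reversal_closed n T"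
  and v: "v \<in> carrier_vec (2*n)" and i: "i \<in> {1..2*n}"
  and sup: "\<forall>k \<in> {1..2*n}. v $ (k - 1) \<noteq> 0 \<longrightarrow> (k, i) \<in> T"
  shows "supp_ok n T (Sv n v i)"
  unfolding supp_ok_def
proof (intro conjI allI impI)
  show "Sv n v i \<in> carrier_mat (2*n) (2*n)" using v by simp
  fix a b assume a: "a < 2*n" and b: "b < 2*n" and ne: "Sv n v i $$ (a,b) \<noteq> (if a = b then 1 else 0)"
  let ?t1 = "(if b = i - 1 then v$a else 0)"
  let ?t2 = "(if a = 2*n - i then v$(2*n-1-b) else 0)"
  let ?t3 = "(if a = 2*n - i \<and> b = i - 1 then v$(2*n-i) else 0)"
  have "Sv n v i $$ (a,b) = (if a = b then 1 else 0) + (?t1 + ?t2 + ?t3)"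
    using Sv_idx[OF v a b i] by (simp add: add.assoc)
  then have "?t1 + ?t2 + ?t3 \<noteq> 0" using ne by auto
  then have "?t1 \<noteq> 0 \<or> ?t2 \<noteq> 0 \<or> ?t3 \<noteq> 0" by (rule bit_sum3_nz)
  then show "(a+1, b+1) \<in> T"
  proof (elim disjE)
    assume h: "?t1 \<noteq> 0"
    then have e: "b = i - 1" and vv: "v $ (a+1-1) \<noteq> 0" by (auto split: if_splits)
    have k: "a + 1 \<in> {1..2*n}" using a by auto
    have "(a+1, i) \<in> T" using sup k vv by blast
    moreover have "b + 1 = i" using e i by auto
    ultimately show ?thesis by simp
  next
    assume h: "?t2 \<noteq> 0"
    then have e: "a = 2*n - i" and "v $ ((2*n-b) - 1) \<noteq> 0" by (auto split: if_splits)
    then have "(2*n-b, i) \<in> T" using sup b by auto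
    then have "(2*n+1-i, 2*n+1-(2*n-b)) \<in> T" using rc unfolding reversal_closed_def by blast
    moreover have "2*n+1-(2*n-b) = b + 1" "2*n+1-i = a + 1" using b e i by auto
    ultimately show ?thesis by simp
  next
    assume h: "?t3 \<noteq> 0"
    then have e: "a = 2*n - i" "b = i - 1" and vv: "v $ (2*n - i) \<noteq> 0" by (auto split: if_splits)
    have k1: "(2*n+1-i) - 1 = 2*n - i" and k2: "2*n+1-i \<in> {1..2*n}" using i by auto
    have "v $ ((2*n+1-i) - 1) \<noteq> 0" using vv k1 by simp
    then have "(2*n+1-i, i) \<in> T" using sup k2 by blast
    moreover have "2*n+1-i = a + 1" "i = b + 1" using e i by auto
    ultimately show ?thesis by simp
  qed
qed

lemma Sv_Bgrp: assumes TP: "T \<subseteq> P n" and rc: "reversal_closed n T"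
  and v: "v \<in> carrier_vec (2*n)" and i: "i \<in> {1..2*n}"
  and sup: "\<forall>k \<in> {1..2*n}. v $ (k - 1) \<noteq> 0 \<longrightarrow> (k, i) \<in> T"
  shows "Sv n v i \<in> Bgrp n T"
proof -
  have "v $ (i - 1) = 0" using sup i diag_notin[OF TP, of i] by blast
  then show ?thesis using Bgrp_iff[OF TP] Sv_Sp[OF v i] Sv_supp[OF TP rc v i sup] by blast
qed

lemma S_idx: assumes a: "a < 2*n" and b: "b < 2*n"
  shows "S n i j $$ (a,b) = (if a = b then 1 else 0) + (if a = i - 1 \<and> b = j - 1 then 1 else 0)
     + (if i + j \<noteq> 2*n+1 \<and> a = 2*n - j \<and> b = 2*n - i then 1 else 0)"
  using a b by (cases "i + j = 2*n+1") (simp_all add: S_def E_idx)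

lemma S_dims[simp]: "dim_row (S n i j) = 2*n" "dim_col (S n i j) = 2*n"
  by (simp_all add: S_def)

lemma S_eq_Sv: assumes i: "i \<in> {1..2*n}" and j: "j \<in> {1..2*n}" and ij: "i \<noteq> j"
  shows "S n i j = Sv n (ev (2*n) i) j"
proof (rule eq_matI)
  fix a b assume "a < dim_row (Sv n (ev (2*n) i) j)" "b < dim_col (Sv n (ev (2*n) i) j)"
  then have a: "a < 2*n" and b: "b < 2*n" by simp_all
  have v: "ev (2*n) i \<in> carrier_vec (2*n)" by simp
  have e1: "2*n - j < 2*n" "2*n-1-b < 2*n" using j b by auto
  have e2: "(2*n-1-b = i - 1) = (b = 2*n - i)" using b i by auto
  show "S n i j $$ (a,b) = Sv n (ev (2*n) i) j $$ (a,b)"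
  proof (cases "i + j = 2*n+1")
    case True
    then have t: "2*n - j = i - 1" "2*n - i = j - 1" by auto
    show ?thesis unfolding S_idx[OF a b] Sv_idx[OF v a b j] using a b e1 e2 t True
      by (simp add: ev_idx)
  next
    case False
    then have "2*n - j \<noteq> i - 1" "j - 1 \<noteq> 2*n - i" using i j by auto
    then show ?thesis unfolding S_idx[OF a b] Sv_idx[OF v a b j] using a b e1 e2 False
      by (simp add: ev_idx)
  qed
qed simp_all

lemma S_Bgrp: assumes TP: "T \<subseteq> P n" and rc: "reversal_closed n T" and ij: "(i,j) \<in> T"
  shows "S n i j \<in> Bgrp n T"
proof -
  have i: "i \<in> {1..2*n}" and j: "j \<in> {1..2*n}" and ne: "i \<noteq> j" using ij TP unfolding P_def by auto
  have v: "ev (2*n) i \<in> carrier_vec (2*n)" by simp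
  have sup: "\<forall>k \<in> {1..2*n}. ev (2*n) i $ (k - 1) \<noteq> 0 \<longrightarrow> (k, j) \<in> T"
  proof (intro ballI impI)
    fix k assume k: "k \<in> {1..2*n}" and nz: "ev (2*n) i $ (k - 1) \<noteq> 0"
    have "k - 1 < 2*n" using k by auto
    then have "k - 1 = i - 1" using nz by (simp add: ev_idx split: if_splits)
    then have "k = i" using k i by auto
    then show "(k, j) \<in> T" using ij by simp
  qed
  show ?thesis using S_eq_Sv[OF i j ne] Sv_Bgrp[OF TP rc v j sup] by simp
qed

lemma Bgrp_upper: assumes TP: "T \<subseteq> P n" and B: "B \<in> Bgrp n T"
  and a: "a < 2*n" and c: "c < 2*n" and ac: "a \<le> c"
  shows "B$$(a,c) = (if a = c then 1 else 0)"
proof (rule ccontr)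
  assume "B$$(a,c) \<noteq> (if a = c then 1 else 0)"
  then have "(a+1,c+1) \<in> T" using B a c unfolding Bgrp_iff[OF TP] supp_ok_def by blast
  then show False using TP ac unfolding P_def by auto
qed

lemma Bgrp_carrier: "T \<subseteq> P n \<Longrightarrow> B \<in> Bgrp n T \<Longrightarrow> B \<in> carrier_mat (2*n) (2*n)"
  unfolding Bgrp_iff supp_ok_def by blast

lemma col_sp: assumes C: "C \<in> Sp n" and x: "x < 2*n" and d: "d < 2*n"
  and cd: "\<forall>y<2*n. C$$(y,d) = (if y = d then 1 else 0)"
  shows "C$$(2*n-1-d, x) = (if x + d = 2*n - 1 then 1 else 0)"
proof -
  have "(\<Sum>y\<in>{0..<2*n}. C$$(2*n-1-y, x) * C$$(y,d)) = (\<Sum>y\<in>{0..<2*n}. if y = d then C$$(2*n-1-y, x) else 0)"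
    using cd by (intro sum.cong) auto
  also have "\<dots> = C$$(2*n-1-d, x)" using d by simp
  finally show ?thesis using sp_cols[OF C x d] by simp
qed

lemma V_dims[simp]: "dim_row (V n B) = 2*n" "dim_col (V n B) = n"
  by (simp_all add: V_def)

lemma V_vec: assumes Bc: "B \<in> carrier_mat (2*n) (2*n)" and j: "j \<in> {1..n}"
  shows "V n B *\<^sub>v ev n j \<in> carrier_vec (2*n)"
    and "\<And>a. a < 2*n \<Longrightarrow> (V n B *\<^sub>v ev n j) $ a = (if j \<le> a \<and> a \<le> 2*n - j then B$$(a, j-1) else 0)"
proof -
  show "V n B *\<^sub>v ev n j \<in> carrier_vec (2*n)" by (rule carrier_vecI) (simp add: V_def)
  fix a assume a: "a < 2*n"
  have "(V n B *\<^sub>v ev n j) $ a = (\<Sum>b\<in>{0..<n}. V n B $$ (a,b) * ev n j $ b)"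
    using a by (simp add: V_def scalar_prod_def)
  also have "\<dots> = (\<Sum>b\<in>{0..<n}. if b = j - 1 then V n B $$ (a,b) else 0)"
    by (intro sum.cong) (auto simp: ev_idx)
  also have "\<dots> = V n B $$ (a, j-1)" using j by auto
  also have "\<dots> = (if j \<le> a \<and> a \<le> 2*n - j then B$$(a, j-1) else 0)"
    using a j by (auto simp: V_def)
  finally show "(V n B *\<^sub>v ev n j) $ a = (if j \<le> a \<and> a \<le> 2*n - j then B$$(a, j-1) else 0)" .
qed

lemma prodm_Cons: "prodm N (A # As) = A * prodm N As"
  by (simp add: prodm_def)
lemma prodm_Nil: "prodm N [] = 1\<^sub>m N"
  by (simp add: prodm_def)

lemma factor_aux:
  assumes TP: "T \<subseteq> P n" and tr: "transitive_rel T" and rc: "reversal_closed n T"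
  shows "B \<in> Bgrp n T \<Longrightarrow> m \<le> n \<Longrightarrow> (\<forall>c<m. \<forall>a<2*n. B$$(a,c) = (if a = c then 1 else 0)) \<Longrightarrow>
    B = prodm (2*n) (map (\<lambda>j. Sv n (V n B *\<^sub>v ev n j) j) [m+1..<n+1])"
proof (induction "n - m" arbitrary: m B)
  case 0
  then have mn: "m = n" by auto
  have Bc: "B \<in> carrier_mat (2*n) (2*n)" using Bgrp_carrier[OF TP "0.prems"(1)] .
  have BSp: "B \<in> Sp n" using "0.prems"(1) Bgrp_iff[OF TP] by blast
  have "B = 1\<^sub>m (2*n)"
  proof (rule eq_matI)
    fix a c assume "a < dim_row (1\<^sub>m (2*n))" "c < dim_col (1\<^sub>m (2*n))"
    then have a: "a < 2*n" and c: "c < 2*n" by auto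
    show "B $$ (a,c) = 1\<^sub>m (2*n) $$ (a,c)"
    proof (cases "c < n")
      case True
      then show ?thesis using "0.prems"(3) mn a c by auto
    next
      case False
      show ?thesis
      proof (cases "a \<le> c")
        case True
        then show ?thesis using Bgrp_upper[OF TP "0.prems"(1) a c] a c by auto
      next
        case ac: False
        define d where "d = 2*n-1-a"
        have d: "d < n" "d < 2*n" using ac False a unfolding d_def by auto
        have ad: "2*n-1-d = a" using a unfolding d_def by auto
        have cd: "\<forall>y<2*n. B$$(y,d) = (if y = d then 1 else 0)" using "0.prems"(3) mn d by auto
        have "B$$(2*n-1-d, c) = (if c + d = 2*n - 1 then 1 else 0)" by (rule col_sp[OF BSp c d(2) cd])
        then show ?thesis using ad a c ac unfolding d_def by auto
      qed
    qed
  qed (use Bc in auto)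
  then show ?case using mn by (simp add: prodm_Nil)
next
  case (Suc k)
  note B = Suc.prems(1) and mn = Suc.prems(2) and cols = Suc.prems(3)
  have mlt: "m < n" using Suc.hyps(2) by auto
  define j where "j = m + 1"
  have j: "j \<in> {1..n}" "j \<in> {1..2*n}" using mlt unfolding j_def by auto
  define v where "v = V n B *\<^sub>v ev n j"
  have Bc: "B \<in> carrier_mat (2*n) (2*n)" using Bgrp_carrier[OF TP B] .
  have BSp: "B \<in> Sp n" using B Bgrp_iff[OF TP] by blast
  have vc: "v \<in> carrier_vec (2*n)" unfolding v_def using V_vec(1)[OF Bc j(1)] .
  have vi: "\<And>a. a < 2*n \<Longrightarrow> v $ a = (if j \<le> a \<and> a \<le> 2*n - j then B$$(a, j-1) else 0)"
    unfolding v_def using V_vec(2)[OF Bc j(1)] .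
  have vj: "v $ (j-1) = 0" using vi[of "j-1"] j by auto
  have sup: "\<forall>k \<in> {1..2*n}. v $ (k - 1) \<noteq> 0 \<longrightarrow> (k, j) \<in> T"
  proof (intro ballI impI)
    fix k assume k: "k \<in> {1..2*n}" and nz: "v $ (k - 1) \<noteq> 0"
    have k1: "k - 1 < 2*n" using k by auto
    have "j \<le> k - 1" and Bnz: "B$$(k-1, j-1) \<noteq> 0" using nz vi[OF k1] by (auto split: if_splits)
    then have "B$$(k-1, j-1) \<noteq> (if k - 1 = j - 1 then 1 else 0)" using j by auto
    moreover have j1: "j - 1 < 2*n" using j by auto
    ultimately have "(k-1+1, j-1+1) \<in> T" using B k1 unfolding Bgrp_iff[OF TP] supp_ok_def by blast
    moreover have "k - 1 + 1 = k" "j - 1 + 1 = j" using k j by auto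
    ultimately show "(k, j) \<in> T" by simp
  qed
  define S' where "S' = Sv n v j"
  have SB: "S' \<in> Bgrp n T" unfolding S'_def by (rule Sv_Bgrp[OF TP rc vc j(2) sup])
  have Sc: "S' \<in> carrier_mat (2*n) (2*n)" unfolding S'_def using vc by simp
  define B' where "B' = S' * B"
  have B'B: "B' \<in> Bgrp n T" unfolding B'_def by (rule Bgrp_mult[OF TP tr SB B])
  have B'i: "B' $$ (a,c) = B$$(a,c) + v$a * B$$(j-1,c)
    + (if a = 2*n - j then (\<Sum>b\<in>{0..<2*n}. v$(2*n-1-b) * B$$(b,c)) + v$(2*n-j) * B$$(j-1,c) else 0)"
    if a: "a < 2*n" and c: "c < 2*n" for a c
    unfolding B'_def S'_def by (rule Sv_mult[OF vc Bc a c j(2)])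
  have colj: "B$$(a, j-1) = (if a = j - 1 then 1 else 0) + v$a" if a: "a < 2*n" for a
  proof -
    consider "a < j - 1" | "a = j - 1" | "j \<le> a \<and> a \<le> 2*n - j" | "a > 2*n - j" by linarith
    then show ?thesis
    proof cases
      case 1 then show ?thesis using Bgrp_upper[OF TP B a, of "j-1"] vi[OF a] j by auto
    next
      case 2 then show ?thesis using Bgrp_upper[OF TP B a, of "j-1"] vi[OF a] j by auto
    next
      case 3 then show ?thesis using vi[OF a] j by auto
    next
      case 4
      define d where "d = 2*n-1-a"
      have d: "d < m" "d < 2*n" using 4 a j unfolding d_def j_def by auto
      have ad: "2*n-1-d = a" using a unfolding d_def by auto
      have cd: "\<forall>y<2*n. B$$(y,d) = (if y = d then 1 else 0)" using cols d by auto
      have "B$$(2*n-1-d, j-1) = (if j - 1 + d = 2*n - 1 then 1 else 0)"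
        by (rule col_sp[OF BSp _ d(2) cd]) (use j in auto)
      then show ?thesis using ad a 4 vi[OF a] j unfolding d_def by auto
    qed
  qed
  have cols': "\<forall>c<m+1. \<forall>a<2*n. B'$$(a,c) = (if a = c then 1 else 0)"
  proof (intro allI impI)
    fix c a assume c: "c < m + 1" and a: "a < 2*n"
    have c2: "c < 2*n" using c mlt by auto
    show "B'$$(a,c) = (if a = c then 1 else 0)"
    proof (cases "c < m")
      case True
      have Bcol: "\<forall>y<2*n. B$$(y,c) = (if y = c then 1 else 0)" using cols True by auto
      have "(\<Sum>b\<in>{0..<2*n}. v$(2*n-1-b) * B$$(b,c)) = (\<Sum>b\<in>{0..<2*n}. if b = c then v$(2*n-1-b) else 0)"
        using Bcol by (intro sum.cong) auto
      also have "\<dots> = v$(2*n-1-c)" using c2 by simp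
      also have "\<dots> = 0" using vi[of "2*n-1-c"] True j_def c2 by auto
      finally have s0: "(\<Sum>b\<in>{0..<2*n}. v$(2*n-1-b) * B$$(b,c)) = 0" .
      have "B$$(j-1,c) = 0" using Bcol True j_def mlt by auto
      then show ?thesis using B'i[OF a c2] s0 Bcol a by simp
    next
      case False
      then have cj: "c = j - 1" using c j_def by auto
      have "(\<Sum>b\<in>{0..<2*n}. v$(2*n-1-b) * B$$(b,c))
          = (\<Sum>b\<in>{0..<2*n}. (if b = j - 1 then v$(2*n-1-b) else 0) + v$(2*n-1-b) * v$b)"
        using colj cj by (intro sum.cong) (auto simp: distrib_left)
      also have "\<dots> = v$(2*n-j)"
      proof -
        have "2*n-1-(j-1) = 2*n-j" "j - 1 < 2*n" using j by auto
        then show ?thesis using j om_self[where f="\<lambda>x. v$x"] by (simp add: sum.distrib)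
      qed
      finally have s1: "(\<Sum>b\<in>{0..<2*n}. v$(2*n-1-b) * B$$(b,c)) = v$(2*n-j)" .
      have bjj: "B$$(j-1,c) = 1" using colj[of "j-1"] vj cj j by auto
      show ?thesis using B'i[OF a c2] s1 bjj colj[OF a] cj by simp
    qed
  qed
  have Vsame: "V n B' *\<^sub>v ev n l = V n B *\<^sub>v ev n l" if l: "l \<in> {m+2..n}" for l
  proof -
    have l1: "l \<in> {1..n}" using l by auto
    have B'c: "B' \<in> carrier_mat (2*n) (2*n)" using Bgrp_carrier[OF TP B'B] .
    show ?thesis
    proof (rule eq_vecI)
      show "dim_vec (V n B' *\<^sub>v ev n l) = dim_vec (V n B *\<^sub>v ev n l)"
        using V_vec(1)[OF B'c l1] V_vec(1)[OF Bc l1] by (simp add: V_def)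
      fix a assume "a < dim_vec (V n B *\<^sub>v ev n l)"
      then have a: "a < 2*n" using V_vec(1)[OF Bc l1] by simp
      show "(V n B' *\<^sub>v ev n l) $ a = (V n B *\<^sub>v ev n l) $ a"
      proof (cases "l \<le> a \<and> a \<le> 2*n - l")
        case True
        have lc: "l - 1 < 2*n" using l by auto
        have "B$$(j-1, l-1) = 0" using Bgrp_upper[OF TP B _ lc, of "j-1"] l j_def mlt by auto
        moreover have "a \<noteq> 2*n - j" using True l j_def by auto
        ultimately have "B'$$(a, l-1) = B$$(a, l-1)" using B'i[OF a lc] by simp
        then show ?thesis using V_vec(2)[OF B'c l1 a] V_vec(2)[OF Bc l1 a] True by simp
      next
        case False
        then show ?thesis unfolding V_vec(2)[OF B'c l1 a] V_vec(2)[OF Bc l1 a] by (simp only: if_not_P[OF False] if_False)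
      qed
    qed
  qed
  have IH: "B' = prodm (2*n) (map (\<lambda>j. Sv n (V n B' *\<^sub>v ev n j) j) [m+1+1..<n+1])"
    using Suc.hyps(1)[of "m+1" B'] Suc.hyps(2) B'B mlt cols' by auto
  also have "map (\<lambda>j. Sv n (V n B' *\<^sub>v ev n j) j) [m+1+1..<n+1] = map (\<lambda>j. Sv n (V n B *\<^sub>v ev n j) j) [m+1+1..<n+1]"
    using Vsame by (intro map_cong) auto
  finally have IH': "B' = prodm (2*n) (map (\<lambda>j. Sv n (V n B *\<^sub>v ev n j) j) [m+1+1..<n+1])" .
  have "S' * B' = (S' * S') * B" unfolding B'_def using Sc Bc by (simp add: sq_assoc[of _ "2*n"])
  also have "\<dots> = B" unfolding S'_def using Sv_invol[OF vc j(2) vj] Bc by simp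
  finally have "B = S' * B'" by simp
  also have "\<dots> = prodm (2*n) (map (\<lambda>j. Sv n (V n B *\<^sub>v ev n j) j) [m+1..<n+1])"
  proof -
    have L: "[m+1..<n+1] = (m+1) # [m+1+1..<n+1]"
      by (metis Suc_eq_plus1 upt_conv_Cons add_less_mono1 mlt)
    show ?thesis by (simp only: L list.map prodm_Cons IH' S'_def v_def j_def)
  qed
  finally show ?case .
qed

lemma Sv_row_j: assumes u: "u \<in> carrier_vec (2*n)" and j: "j \<in> {1..2*n}" and uj: "u$(j-1) = 0"
  and c: "c < 2*n"
  shows "Sv n u j $$ (j-1, c) = (if j - 1 = c then 1 else 0)"
proof -
  have j1: "j - 1 < 2*n" and ne: "j - 1 \<noteq> 2*n - j" using j by auto presburger
  show ?thesis using u j c j1 ne uj by (simp add: Sv_idx)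
qed

lemma Sv_prod: assumes w: "w \<in> carrier_vec (2*n)" and u: "u \<in> carrier_vec (2*n)" and x: "x \<in> carrier_vec (2*n)"
  and j: "j \<in> {1..2*n}" and wj: "w$(j-1) = 0" and uj: "u$(j-1) = 0"
  and xe: "\<forall>a<2*n. x$a = w$a + u$a + (if a = 2*n - j then (\<Sum>b\<in>{0..<2*n}. w$(2*n-1-b) * u$b) else 0)"
  shows "Sv n w j * Sv n u j = Sv n x j"
proof (rule eq_matI)
  fix a c assume "a < dim_row (Sv n x j)" "c < dim_col (Sv n x j)"
  then have a: "a < 2*n" and c: "c < 2*n" by auto
  let ?O = "(\<Sum>b\<in>{0..<2*n}. w$(2*n-1-b) * u$b)"
  have j1: "j - 1 < 2*n" and ne: "j - 1 \<noteq> 2*n - j" and pj: "2*n-1-(2*n-j) = j - 1" and pl: "2*n - j < 2*n"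
    using j by auto presburger
  have r: "Sv n u j $$ (j-1, c) = (if j - 1 = c then 1 else 0)" by (rule Sv_row_j[OF u j uj c])
  have "(\<Sum>b\<in>{0..<2*n}. w$(2*n-1-b) * Sv n u j $$ (b,c))
     = (\<Sum>b\<in>{0..<2*n}. (if b = c then w$(2*n-1-b) else 0) + (if c = j - 1 then w$(2*n-1-b) * u$b else 0)
     + (if b = 2*n - j then w$(2*n-1-b) * u$(2*n-1-c) else 0) + (if b = 2*n - j \<and> c = j - 1 then w$(2*n-1-b) * u$(2*n-j) else 0))"
    using u j c by (intro sum.cong) (auto simp: Sv_idx distrib_left)
  also have "\<dots> = w$(2*n-1-c) + (if c = j - 1 then ?O else 0)"
    using c pl pj wj by (cases "c = j - 1") (simp_all add: sum.distrib)
  finally have s: "(\<Sum>b\<in>{0..<2*n}. w$(2*n-1-b) * Sv n u j $$ (b,c)) = w$(2*n-1-c) + (if c = j - 1 then ?O else 0)" .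
  have "(Sv n w j * Sv n u j) $$ (a, c) = Sv n u j $$ (a,c) + w$a * Sv n u j $$ (j-1,c)
    + (if a = 2*n - j then (\<Sum>b\<in>{0..<2*n}. w$(2*n-1-b) * Sv n u j $$ (b,c)) + w$(2*n-j) * Sv n u j $$ (j-1,c) else 0)"
    by (rule Sv_mult[OF w Sv_carrier[OF u] a c j])
  also have "\<dots> = Sv n u j $$ (a,c) + w$a * (if j - 1 = c then 1 else 0)
    + (if a = 2*n - j then w$(2*n-1-c) + (if c = j - 1 then ?O else 0) + w$(2*n-j) * (if j - 1 = c then 1 else 0) else 0)"
    by (simp only: r s)
  also have "\<dots> = Sv n x j $$ (a,c)"
  proof -
    have c1: "2*n-1-c < 2*n" using c by auto
    have x1: "x$a = w$a + u$a + (if a = 2*n - j then ?O else 0)" using xe a by auto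
    have x2: "x$(2*n-1-c) = w$(2*n-1-c) + u$(2*n-1-c) + (if 2*n-1-c = 2*n - j then ?O else 0)" using xe c1 by auto
    have x3: "x$(2*n-j) = w$(2*n-j) + u$(2*n-j) + ?O" using xe pl by auto
    have e: "(2*n-1-c = 2*n-j) = (c = j - 1)" using c j by auto
    show ?thesis
      unfolding Sv_idx[OF u a c j] Sv_idx[OF x a c j] x1 x2 x3 e
      by (cases "c = j - 1"; cases "a = 2*n - j"; simp add: add_ac)
  qed
  finally show "(Sv n w j * Sv n u j) $$ (a, c) = Sv n x j $$ (a,c)" .
qed (use w in auto)

lemma Sv_zero: assumes j: "j \<in> {1..2*n}" shows "Sv n (0\<^sub>v (2*n)) j = 1\<^sub>m (2*n)"
proof (rule eq_matI)
  fix a c assume "a < dim_row (1\<^sub>m (2*n))" "c < dim_col (1\<^sub>m (2*n))"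
  then have a: "a < 2*n" and c: "c < 2*n" by auto
  have c1: "2*n-1-c < 2*n" and pl: "2*n - j < 2*n" using c j by auto
  show "Sv n (0\<^sub>v (2*n)) j $$ (a,c) = 1\<^sub>m (2*n) $$ (a,c)"
    using a c c1 pl by (simp add: Sv_idx[OF zero_carrier_vec a c j])
qed auto

lemma prodm_carrier: "set gs \<subseteq> carrier_mat N N \<Longrightarrow> prodm N gs \<in> carrier_mat N N"
  by (induction gs) (auto simp: prodm_def)

lemma prodm_append: "set xs \<subseteq> carrier_mat N N \<Longrightarrow> set ys \<subseteq> carrier_mat N N \<Longrightarrow>
  prodm N (xs @ ys) = prodm N xs * prodm N ys"
proof (induction xs)
  case Nil
  then show ?case using prodm_carrier[OF Nil(2)] by (simp add: prodm_Nil)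
next
  case (Cons x xs)
  then have x: "x \<in> carrier_mat N N" and xs: "set xs \<subseteq> carrier_mat N N" by auto
  have "prodm N ((x # xs) @ ys) = x * (prodm N xs * prodm N ys)"
    using Cons xs by (simp add: prodm_Cons)
  also have "\<dots> = x * prodm N xs * prodm N ys"
    using x prodm_carrier[OF xs] prodm_carrier[OF Cons(3)] by (simp add: sq_assoc)
  finally show ?case by (simp add: prodm_Cons)
qed

lemma prodm_single: "A \<in> carrier_mat N N \<Longrightarrow> prodm N [A] = A"
  by (simp add: prodm_def)

lemma S_carrier[simp]: "S n i j \<in> carrier_mat (2*n) (2*n)"
  by (rule carrier_matI) simp_all

lemma Gens_carrier: "Gens n T \<subseteq> carrier_mat (2*n) (2*n)"
  unfolding Gens_def by auto

lemma sum_ev: assumes k: "k < 2*n" shows "(\<Sum>b\<in>{0..<2*n}. f b * ev (2*n) (k+1) $ b) = f k"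
proof -
  have "(\<Sum>b\<in>{0..<2*n}. f b * ev (2*n) (k+1) $ b) = (\<Sum>b\<in>{0..<2*n}. if b = k then f b else 0)"
    by (intro sum.cong) (auto simp: ev_idx)
  also have "\<dots> = f k" using k by simp
  finally show ?thesis .
qed

lemma Sv_gens:
  assumes TP: "T \<subseteq> P n" and tr: "transitive_rel T" and rc: "reversal_closed n T" and j: "j \<in> {1..n}"
  shows "\<forall>v \<in> carrier_vec (2*n). (\<forall>x<2*n. v$x \<noteq> 0 \<longrightarrow> x < m \<and> j \<le> x \<and> x \<le> 2*n-j \<and> (x+1,j) \<in> T)
     \<longrightarrow> (\<exists>gs. set gs \<subseteq> Gens n T \<and> Sv n v j = prodm (2*n) gs)"
proof (induction m)
  case 0
  show ?case
  proof (intro ballI impI)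
    fix v :: "bit vec" assume vc: "v \<in> carrier_vec (2*n)" and sup: "\<forall>x<2*n. v$x \<noteq> 0 \<longrightarrow> x < 0 \<and> j \<le> x \<and> x \<le> 2*n-j \<and> (x+1,j) \<in> T"
    have "v = 0\<^sub>v (2*n)"
    proof (rule eq_vecI)
      fix x assume "x < dim_vec (0\<^sub>v (2*n) :: bit vec)"
      then show "v $ x = 0\<^sub>v (2*n) $ x" using sup by auto
    qed (use vc in auto)
    moreover have "j \<in> {1..2*n}" using j by auto
    ultimately have "Sv n v j = prodm (2*n) []" using Sv_zero by (simp add: prodm_Nil)
    then show "\<exists>gs. set gs \<subseteq> Gens n T \<and> Sv n v j = prodm (2*n) gs" by (intro exI[of _ "[]"]) simp
  qed
next
  case (Suc m)
  show ?case
  proof (intro ballI impI)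
    fix v :: "bit vec" assume vc: "v \<in> carrier_vec (2*n)"
      and sup: "\<forall>x<2*n. v$x \<noteq> 0 \<longrightarrow> x < Suc m \<and> j \<le> x \<and> x \<le> 2*n-j \<and> (x+1,j) \<in> T"
    have j2: "j \<in> {1..2*n}" using j by auto
    show "\<exists>gs. set gs \<subseteq> Gens n T \<and> Sv n v j = prodm (2*n) gs"
    proof (cases "m < 2*n \<and> v$m \<noteq> 0")
      case False
      have "\<forall>x<2*n. v$x \<noteq> 0 \<longrightarrow> x < m \<and> j \<le> x \<and> x \<le> 2*n-j \<and> (x+1,j) \<in> T"
      proof (intro allI impI)
        fix x assume x: "x < 2*n" and nz: "v$x \<noteq> 0"
        have "x \<noteq> m" using False x nz by auto
        then show "x < m \<and> j \<le> x \<and> x \<le> 2*n-j \<and> (x+1,j) \<in> T" using sup x nz by auto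
      qed
      then show ?thesis using Suc.IH vc by blast
    next
      case True
      then have m2: "m < 2*n" and vm: "v$m = 1" by auto
      have mK: "j \<le> m" "m \<le> 2*n-j" "(m+1,j) \<in> T" using sup m2 vm by auto
      have vj: "v$(j-1) = 0"
      proof (rule ccontr)
        assume "v$(j-1) \<noteq> 0"
        then have "j \<le> j - 1" using sup j2 by auto
        then show False using j by auto
      qed
      define w where "w = vec (2*n) (\<lambda>x. if x = m then 0 else v$x)"
      have wc: "w \<in> carrier_vec (2*n)" unfolding w_def by simp
      have wi: "\<And>x. x < 2*n \<Longrightarrow> w$x = (if x = m then 0 else v$x)" unfolding w_def by simp
      have supw: "\<forall>x<2*n. w$x \<noteq> 0 \<longrightarrow> x < m \<and> j \<le> x \<and> x \<le> 2*n-j \<and> (x+1,j) \<in> T"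
      proof (intro allI impI)
        fix x assume x: "x < 2*n" and nz: "w$x \<noteq> 0"
        then have "x \<noteq> m" "v$x \<noteq> 0" using wi by (auto split: if_splits)
        then show "x < m \<and> j \<le> x \<and> x \<le> 2*n-j \<and> (x+1,j) \<in> T" using sup x by auto
      qed
      obtain gw where gw: "set gw \<subseteq> Gens n T" "Sv n w j = prodm (2*n) gw"
        using Suc.IH wc supw by blast
      have wj: "w$(j-1) = 0" using wi[of "j-1"] vj j by auto
      define em where "em = ev (2*n) (m+1)"
      have emc: "em \<in> carrier_vec (2*n)" unfolding em_def by simp
      have emi: "\<And>x. x < 2*n \<Longrightarrow> em$x = (if x = m then 1 else 0)" unfolding em_def by (simp add: ev_idx)
      have emj: "em$(j-1) = 0" using emi[of "j-1"] mK j by auto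
      have mj: "m + 1 \<in> {1..2*n}" "m + 1 \<noteq> j" using m2 mK by auto
      have S1: "S n (m+1) j = Sv n em j" unfolding em_def by (rule S_eq_Sv[OF mj(1) j2 mj(2)])
      have G1: "S n (m+1) j \<in> Gens n T" unfolding Gens_def mem_Collect_eq
        using j mK by (intro exI[of _ "m+1"] exI[of _ j]) auto
      have Om: "(\<Sum>b\<in>{0..<2*n}. w$(2*n-1-b) * em$b) = w$(2*n-1-m)"
        unfolding em_def by (rule sum_ev[OF m2])
      show ?thesis
      proof (cases "w$(2*n-1-m) = 0")
        case True
        have "Sv n w j * Sv n em j = Sv n v j"
        proof (rule Sv_prod[OF wc emc vc j2 wj emj])
          show "\<forall>a<2*n. v$a = w$a + em$a + (if a = 2*n - j then (\<Sum>b\<in>{0..<2*n}. w$(2*n-1-b) * em$b) else 0)"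
            using wi emi vm True unfolding Om by auto
        qed
        moreover have "prodm (2*n) (gw @ [S n (m+1) j]) = prodm (2*n) gw * prodm (2*n) [S n (m+1) j]"
          using gw Gens_carrier G1 by (intro prodm_append) auto
        moreover have "prodm (2*n) [S n (m+1) j] = Sv n em j"
          using S1 Sv_carrier[OF emc] by (simp add: prodm_single)
        ultimately have "Sv n v j = prodm (2*n) (gw @ [S n (m+1) j])"
          using gw(2) by simp
        moreover have "set (gw @ [S n (m+1) j]) \<subseteq> Gens n T" using gw G1 by auto
        ultimately show ?thesis by blast
      next
        case False
        then have Om1: "w$(2*n-1-m) = 1" by simp
        have pm: "2*n-1-m \<noteq> m" "2*n-1-m < 2*n" using m2 by auto presburger
        then have "v$(2*n-1-m) \<noteq> 0" using Om1 wi[of "2*n-1-m"] by auto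
        then have "(2*n-1-m+1, j) \<in> T" using sup pm(2) by blast
        moreover have "2*n-1-m+1 = 2*n-m" using m2 by auto
        ultimately have t1: "(2*n-m, j) \<in> T" by simp
        then have "(2*n+1-j, 2*n+1-(2*n-m)) \<in> T" using rc unfolding reversal_closed_def by blast
        moreover have "2*n+1-(2*n-m) = m+1" using m2 by auto
        ultimately have "(2*n+1-j, m+1) \<in> T" by simp
        then have tp: "(2*n+1-j, j) \<in> T" using mK(3) tr unfolding transitive_rel_def by blast
        define p where "p = 2*n - j"
        have jj: "1 \<le> j" "j \<le> n" using j by auto
        have p: "p < 2*n" "p \<noteq> j - 1" "2*n-1-p = j - 1" "p + 1 = 2*n+1-j" unfolding p_def using jj by arith+
        define v' where "v' = vec (2*n) (\<lambda>x. v$x + (if x = p then 1 else 0))"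
        have v'c: "v' \<in> carrier_vec (2*n)" unfolding v'_def by simp
        have v'i: "\<And>x. x < 2*n \<Longrightarrow> v'$x = v$x + (if x = p then 1 else 0)" unfolding v'_def by simp
        have v'j: "v'$(j-1) = 0" using v'i[of "j-1"] vj p j by auto
        define ep where "ep = ev (2*n) (p+1)"
        have epc: "ep \<in> carrier_vec (2*n)" unfolding ep_def by simp
        have epi: "\<And>x. x < 2*n \<Longrightarrow> ep$x = (if x = p then 1 else 0)" unfolding ep_def by (simp add: ev_idx)
        have epj: "ep$(j-1) = 0" using epi[of "j-1"] p j by auto
        have pj: "p + 1 \<in> {1..2*n}" "p + 1 \<noteq> j" unfolding p_def using jj by auto
        have S2: "S n (2*n+1-j) j = Sv n ep j" unfolding ep_def p(4)[symmetric] by (rule S_eq_Sv[OF pj(1) j2 pj(2)])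
        have G2: "S n (2*n+1-j) j \<in> Gens n T" unfolding Gens_def mem_Collect_eq
          using j tp by (intro exI[of _ "2*n+1-j"] exI[of _ j]) auto
        have Op: "(\<Sum>b\<in>{0..<2*n}. v'$(2*n-1-b) * ep$b) = v'$(2*n-1-p)"
          unfolding ep_def by (rule sum_ev[OF p(1)])
        have e1: "Sv n w j * Sv n em j = Sv n v' j"
        proof (rule Sv_prod[OF wc emc v'c j2 wj emj])
          show "\<forall>a<2*n. v'$a = w$a + em$a + (if a = 2*n - j then (\<Sum>b\<in>{0..<2*n}. w$(2*n-1-b) * em$b) else 0)"
            using wi emi vm v'i Om1 unfolding Om p_def by auto
        qed
        have e2: "Sv n v' j * Sv n ep j = Sv n v j"
        proof (rule Sv_prod[OF v'c epc vc j2 v'j epj])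
          show "\<forall>a<2*n. v$a = v'$a + ep$a + (if a = 2*n - j then (\<Sum>b\<in>{0..<2*n}. v'$(2*n-1-b) * ep$b) else 0)"
            using v'i epi v'j unfolding Op p(3) p_def[symmetric] by auto
        qed
        have Sc: "Sv n w j \<in> carrier_mat (2*n) (2*n)" "Sv n em j \<in> carrier_mat (2*n) (2*n)" "Sv n ep j \<in> carrier_mat (2*n) (2*n)"
          using wc emc epc by auto
        have "prodm (2*n) (gw @ [S n (m+1) j, S n (2*n+1-j) j]) = prodm (2*n) gw * prodm (2*n) [S n (m+1) j, S n (2*n+1-j) j]"
          using gw Gens_carrier G1 G2 by (intro prodm_append) auto
        also have "\<dots> = Sv n w j * (Sv n em j * Sv n ep j)"
          using gw(2) S1 S2 Sc by (simp add: prodm_Cons prodm_Nil right_mult_one_mat[of _ "2*n" "2*n"])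
        also have "\<dots> = Sv n v j"
          using Sc e1 e2 by (simp add: sq_assoc[symmetric])
        finally have "Sv n v j = prodm (2*n) (gw @ [S n (m+1) j, S n (2*n+1-j) j])" by simp
        moreover have "set (gw @ [S n (m+1) j, S n (2*n+1-j) j]) \<subseteq> Gens n T" using gw G1 G2 by auto
        ultimately show ?thesis by blast
      qed
    qed
  qed
qed

lemma V_supp2: assumes TP: "T \<subseteq> P n" and B: "B \<in> Bgrp n T" and j: "j \<in> {1..n}"
  shows "\<forall>x<2*n. (V n B *\<^sub>v ev n j)$x \<noteq> 0 \<longrightarrow> x < 2*n \<and> j \<le> x \<and> x \<le> 2*n-j \<and> (x+1,j) \<in> T"
proof (intro allI impI)
  fix x assume x: "x < 2*n" and nz: "(V n B *\<^sub>v ev n j)$x \<noteq> 0"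
  have Bc: "B \<in> carrier_mat (2*n) (2*n)" using Bgrp_carrier[OF TP B] .
  have r: "j \<le> x \<and> x \<le> 2*n-j" and Bnz: "B$$(x, j-1) \<noteq> 0" using nz V_vec(2)[OF Bc j x] by (auto split: if_splits)
  then have "B$$(x, j-1) \<noteq> (if x = j - 1 then 1 else 0)" using j by auto
  moreover have j1: "j - 1 < 2*n" using j by auto
  ultimately have "(x+1, j-1+1) \<in> T" using B x unfolding Bgrp_iff[OF TP] supp_ok_def by blast
  moreover have "j - 1 + 1 = j" using j by auto
  ultimately show "x < 2*n \<and> j \<le> x \<and> x \<le> 2*n-j \<and> (x+1,j) \<in> T" using r x by simp
qed

lemma V_supp1: assumes TP: "T \<subseteq> P n" and B: "B \<in> Bgrp n T" and j: "j \<in> {1..n}"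
  shows "\<forall>k \<in> {1..2*n}. (V n B *\<^sub>v ev n j) $ (k - 1) \<noteq> 0 \<longrightarrow> (k, j) \<in> T"
proof (intro ballI impI)
  fix k assume k: "k \<in> {1..2*n}" and nz: "(V n B *\<^sub>v ev n j) $ (k - 1) \<noteq> 0"
  have k1: "k - 1 < 2*n" using k by auto
  have "(k-1+1, j) \<in> T" using V_supp2[OF TP B j] k1 nz by blast
  moreover have "k - 1 + 1 = k" using k by auto
  ultimately show "(k,j) \<in> T" by simp
qed

lemma Sv_V_gens: assumes TP: "T \<subseteq> P n" and tr: "transitive_rel T" and rc: "reversal_closed n T"
  and B: "B \<in> Bgrp n T" and j: "j \<in> {1..n}"
  shows "\<exists>gs. set gs \<subseteq> Gens n T \<and> Sv n (V n B *\<^sub>v ev n j) j = prodm (2*n) gs"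
proof -
  have Bc: "B \<in> carrier_mat (2*n) (2*n)" using Bgrp_carrier[OF TP B] .
  show ?thesis using Sv_gens[OF TP tr rc j, of "2*n"] V_vec(1)[OF Bc j] V_supp2[OF TP B j] by blast
qed

lemma prodm_map_concat:
  assumes "\<forall>x\<in>set xs. f x = prodm N (G x) \<and> set (G x) \<subseteq> carrier_mat N N"
  shows "prodm N (map f xs) = prodm N (concat (map G xs))"
  using assms
proof (induction xs)
  case Nil then show ?case by simp
next
  case (Cons x xs)
  have c1: "set (G x) \<subseteq> carrier_mat N N" and c2: "set (concat (map G xs)) \<subseteq> carrier_mat N N"
    using Cons.prems by auto
  have "prodm N (map f (x # xs)) = f x * prodm N (map f xs)" by (simp add: prodm_Cons)
  also have "\<dots> = prodm N (G x) * prodm N (concat (map G xs))" using Cons by simp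
  also have "\<dots> = prodm N (G x @ concat (map G xs))" using prodm_append[OF c1 c2] by simp
  finally show ?case by simp
qed

lemma Bgrp_gens: assumes TP: "T \<subseteq> P n" and tr: "transitive_rel T" and rc: "reversal_closed n T"
  and B: "B \<in> Bgrp n T"
  shows "\<exists>gs. set gs \<subseteq> Gens n T \<and> B = prodm (2*n) gs"
proof -
  let ?f = "\<lambda>j. Sv n (V n B *\<^sub>v ev n j) j"
  have cols: "\<forall>c<0. \<forall>a<2*n. B$$(a,c) = (if a = c then 1 else 0)" by simp
  have fact: "B = prodm (2*n) (map ?f [0+1..<n+1])"
    by (rule factor_aux[OF TP tr rc B _ cols]) simp
  have "\<forall>j. \<exists>gs. j \<in> {1..n} \<longrightarrow> set gs \<subseteq> Gens n T \<and> ?f j = prodm (2*n) gs"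
    using Sv_V_gens[OF TP tr rc B] by blast
  then obtain G where G: "\<And>j. j \<in> {1..n} \<Longrightarrow> set (G j) \<subseteq> Gens n T \<and> ?f j = prodm (2*n) (G j)"
    by metis
  have "prodm (2*n) (map ?f [1..<n+1]) = prodm (2*n) (concat (map G [1..<n+1]))"
    using G Gens_carrier by (intro prodm_map_concat) fastforce
  moreover have "set (concat (map G [1..<n+1])) \<subseteq> Gens n T"
  proof
    fix x assume "x \<in> set (concat (map G [1..<n+1]))"
    then obtain a where a: "a \<in> set [1..<n+1]" and xa: "x \<in> set (G a)" by auto
    from a have "a \<in> {1..n}" by auto
    then show "x \<in> Gens n T" using G xa by blast
  qed
  moreover have fact': "B = prodm (2*n) (map ?f [1..<n+1])" using fact by (simp only: add_0_left)
  ultimately show ?thesis by metis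
qed

lemma Gens_Bgrp: assumes TP: "T \<subseteq> P n" and rc: "reversal_closed n T"
  shows "Gens n T \<subseteq> Bgrp n T"
  unfolding Gens_def using S_Bgrp[OF TP rc] by auto

lemma Gens_invol: assumes TP: "T \<subseteq> P n" and g: "g \<in> Gens n T"
  shows "g * g = 1\<^sub>m (2*n)"
proof -
  obtain i j where gij: "g = S n i j" and ij: "(i,j) \<in> T" using g unfolding Gens_def by auto
  have i: "i \<in> {1..2*n}" and j: "j \<in> {1..2*n}" and ne: "i \<noteq> j" using ij TP unfolding P_def by auto
  have e: "ev (2*n) i $ (j - 1) = 0" using i j ne by (auto simp: ev_idx)
  show ?thesis unfolding gij S_eq_Sv[OF i j ne] using Sv_invol[OF ev_carrier j e] .
qed

lemma prodm_Bgrp: assumes TP: "T \<subseteq> P n" and tr: "transitive_rel T"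
  shows "set gs \<subseteq> Bgrp n T \<Longrightarrow> prodm (2*n) gs \<in> Bgrp n T"
  by (induction gs) (auto simp: prodm_Nil prodm_Cons one_Bgrp[OF TP] Bgrp_mult[OF TP tr])

lemma prodm_rev_inv: assumes TP: "T \<subseteq> P n"
  shows "set gs \<subseteq> Gens n T \<Longrightarrow> prodm (2*n) (rev gs) * prodm (2*n) gs = 1\<^sub>m (2*n)"
proof (induction gs)
  case Nil then show ?case by (simp add: prodm_Nil)
next
  case (Cons g gs)
  have gG: "g \<in> Gens n T" and gsG: "set gs \<subseteq> Gens n T" using Cons.prems by auto
  have gc: "g \<in> carrier_mat (2*n) (2*n)" using gG Gens_carrier by auto
  have gsc: "set gs \<subseteq> carrier_mat (2*n) (2*n)" using gsG Gens_carrier by auto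
  have rc: "set (rev gs) \<subseteq> carrier_mat (2*n) (2*n)" using gsc by auto
  have P1: "prodm (2*n) (rev gs) \<in> carrier_mat (2*n) (2*n)" using prodm_carrier[OF rc] .
  have P2: "prodm (2*n) gs \<in> carrier_mat (2*n) (2*n)" using prodm_carrier[OF gsc] .
  have "prodm (2*n) (rev (g # gs)) = prodm (2*n) (rev gs) * g"
    using prodm_append[OF rc, of "[g]"] gc by (simp add: prodm_single)
  then have "prodm (2*n) (rev (g # gs)) * prodm (2*n) (g # gs) = prodm (2*n) (rev gs) * g * (g * prodm (2*n) gs)"
    by (simp add: prodm_Cons)
  also have "\<dots> = prodm (2*n) (rev gs) * ((g * g) * prodm (2*n) gs)"
    using P1 P2 gc by (simp add: sq_assoc)
  also have "\<dots> = prodm (2*n) (rev gs) * prodm (2*n) gs"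
    using Gens_invol[OF TP gG] P2 by simp
  also have "\<dots> = 1\<^sub>m (2*n)" using Cons.IH[OF gsG] .
  finally show ?case .
qed

lemma prodm_gen_group: "set gs \<subseteq> G \<Longrightarrow> prodm N gs \<in> gen_group N G"
  by (induction gs) (auto simp: prodm_Nil prodm_Cons intro: gen_group.intros)

lemma gen_group_eq: assumes TP: "T \<subseteq> P n" and tr: "transitive_rel T" and rc: "reversal_closed n T"
  shows "gen_group (2*n) (Gens n T) = Bgrp n T"
proof
  show "gen_group (2*n) (Gens n T) \<subseteq> Bgrp n T"
  proof
    fix A assume "A \<in> gen_group (2*n) (Gens n T)"
    then show "A \<in> Bgrp n T"
    proof (induction rule: gen_group.induct)
      case one then show ?case using one_Bgrp[OF TP] .
    next
      case (gen g) then show ?case using Gens_Bgrp[OF TP rc] by auto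
    next
      case (mult A C) then show ?case using Bgrp_mult[OF TP tr] by blast
    next
      case (inv A A')
      obtain gs where gs: "set gs \<subseteq> Gens n T" "A = prodm (2*n) gs"
        using Bgrp_gens[OF TP tr rc inv.IH] by blast
      have Ac: "A \<in> carrier_mat (2*n) (2*n)" using Bgrp_carrier[OF TP inv.IH] .
      have rc': "set (rev gs) \<subseteq> Bgrp n T" using gs(1) Gens_Bgrp[OF TP rc] by auto
      have RB: "prodm (2*n) (rev gs) \<in> Bgrp n T" using prodm_Bgrp[OF TP tr rc'] .
      have Rc: "prodm (2*n) (rev gs) \<in> carrier_mat (2*n) (2*n)" using Bgrp_carrier[OF TP RB] .
      have "A' = (prodm (2*n) (rev gs) * A) * A'"
        using prodm_rev_inv[OF TP gs(1)] gs(2) inv.hyps(2) by simp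
      also have "\<dots> = prodm (2*n) (rev gs) * (A * A')"
        using Rc Ac inv.hyps(2) by (simp add: sq_assoc)
      also have "\<dots> = prodm (2*n) (rev gs)" using inv.hyps(3) Rc by simp
      finally show ?case using RB by simp
    qed
  qed
next
  show "Bgrp n T \<subseteq> gen_group (2*n) (Gens n T)"
  proof
    fix B assume "B \<in> Bgrp n T"
    then obtain gs where "set gs \<subseteq> Gens n T" "B = prodm (2*n) gs" using Bgrp_gens[OF TP tr rc] by blast
    then show "B \<in> gen_group (2*n) (Gens n T)" using prodm_gen_group by blast
  qed
qed

theorem theorem2:
  fixes n :: nat and T :: "(nat \<times> nat) set"
  assumes "T \<subseteq> P n" and "transitive_rel T" and "reversal_closed n T"
  shows "(\<forall>(i, j) \<in> T. S n i j \<in> Bgrp n T)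
    \<and> (\<forall>i \<in> {1..2*n}. \<forall>v \<in> carrier_vec (2*n).
          (\<forall>k \<in> {1..2*n}. v $ (k - 1) \<noteq> 0 \<longrightarrow> (k, i) \<in> T) \<longrightarrow> Sv n v i \<in> Bgrp n T)
    \<and> gen_group (2*n) (Gens n T) = Bgrp n T
    \<and> (\<forall>B \<in> Bgrp n T.
          B = prodm (2*n) (map (\<lambda>j. Sv n (V n B *\<^sub>v ev n j) j) [1..<n+1])
          \<and> (\<forall>j \<in> {1..n}. Sv n (V n B *\<^sub>v ev n j) j \<in> Bgrp n T
               \<and> (\<exists>gs. set gs \<subseteq> Gens n T \<and> Sv n (V n B *\<^sub>v ev n j) j = prodm (2*n) gs)))"
proof (intro conjI)
  note TP = assms(1) and tr = assms(2) and rc = assms(3)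
  show "\<forall>(i, j) \<in> T. S n i j \<in> Bgrp n T" using S_Bgrp[OF TP rc] by auto
  show "\<forall>i \<in> {1..2*n}. \<forall>v \<in> carrier_vec (2*n).
          (\<forall>k \<in> {1..2*n}. v $ (k - 1) \<noteq> 0 \<longrightarrow> (k, i) \<in> T) \<longrightarrow> Sv n v i \<in> Bgrp n T"
    using Sv_Bgrp[OF TP rc] by blast
  show "gen_group (2*n) (Gens n T) = Bgrp n T" by (rule gen_group_eq[OF TP tr rc])
  show "\<forall>B \<in> Bgrp n T.
          B = prodm (2*n) (map (\<lambda>j. Sv n (V n B *\<^sub>v ev n j) j) [1..<n+1])
          \<and> (\<forall>j \<in> {1..n}. Sv n (V n B *\<^sub>v ev n j) j \<in> Bgrp n T
               \<and> (\<exists>gs. set gs \<subseteq> Gens n T \<and> Sv n (V n B *\<^sub>v ev n j) j = prodm (2*n) gs))"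
  proof (intro ballI conjI)
    fix B assume B: "B \<in> Bgrp n T"
    have cols: "\<forall>c<0. \<forall>a<2*n. B$$(a,c) = (if a = c then 1 else 0)" by simp
    have "B = prodm (2*n) (map (\<lambda>j. Sv n (V n B *\<^sub>v ev n j) j) [0+1..<n+1])"
      by (rule factor_aux[OF TP tr rc B _ cols]) simp
    then show "B = prodm (2*n) (map (\<lambda>j. Sv n (V n B *\<^sub>v ev n j) j) [1..<n+1])" by (simp only: add_0_left)
    fix j assume j: "j \<in> {1..n}"
    have Bc: "B \<in> carrier_mat (2*n) (2*n)" using Bgrp_carrier[OF TP B] .
    have j2: "j \<in> {1..2*n}" using j by auto
    show "Sv n (V n B *\<^sub>v ev n j) j \<in> Bgrp n T"
      by (rule Sv_Bgrp[OF TP rc V_vec(1)[OF Bc j] j2 V_supp1[OF TP B j]])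
    show "\<exists>gs. set gs \<subseteq> Gens n T \<and> Sv n (V n B *\<^sub>v ev n j) j = prodm (2*n) gs"
      by (rule Sv_V_gens[OF TP tr rc B j])
  qed
qed

end
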